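(* Let $b=(b_1,\dots,b_d)\in(0,\infty)^d$. For each $j\in\{1,\dots,d\}$ let $\Lambda_j = \{\pm\lambda_j(k) : k\in\mathbb{N}_0\}\subseteq\mathbb{R}$, where $\lambda_j:\mathbb{N}_0\to(0,\infty)$ is increasing, and let $\Lambda = \Lambda_1\times\cdots\times\Lambda_d$. If $$\liminf_{k\to\infty}\frac{\lambda_j(k)}{\sqrt{k}} < \frac{1}{\sqrt{b_j e}}$$ for every $j\in\{1,\dots,d\}$, then $\Lambda$ is a uniqueness set for $\mathcal{O}^b(\mathbb{C}^d)$. If, on the other hand, $$\liminf_{k\to\infty}\frac{\lambda_j(k)}{\sqrt{k}} > \sqrt{\frac{\pi}{b_j}}$$ for some $j\in\{1,\dots,d\}$, then $\Lambda$ is not a uniqueness set for $\mathcal{O}^b(\mathbb{C}^d)$.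
   Context: For $b\in(0,\infty)^d$, $\mathcal{O}^b(\mathbb{C}^d)$ is the set of entire functions $F$ on $\mathbb{C}^d$ for which there is $C>0$ with $|F(z_1,\dots,z_d)|\le C\prod_{j=1}^d e^{b_j|z_j|^2}$ for all $z\in\mathbb{C}^d$. A set $\Lambda\subseteq\mathbb{C}^d$ is a uniqueness set for a linear space $\mathcal{S}$ of entire functions if every $F\in\mathcal{S}$ vanishing on $\Lambda$ is identically zero. *)

theory Defs
  imports "HOL-Analysis.Analysis" "HOL-Library.Extended_Real"
begin

text \<open>Points of C^d are modelled as vectors complex ^ 'n, where 'n is a finite
index type with CARD('n) = d.\<close>

definition complex_linear_cd :: "(complex ^ 'n \<Rightarrow> complex) \<Rightarrow> bool" where
  "complex_linear_cd L \<longleftrightarrow>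
     (\<forall>u v. L (u + v) = L u + L v) \<and> (\<forall>c v. L (c *s v) = c * L v)"

definition entire_cd :: "(complex ^ 'n \<Rightarrow> complex) \<Rightarrow> bool" where
  "entire_cd F \<longleftrightarrow>
     (\<forall>z. \<exists>L. (F has_derivative L) (at z) \<and> complex_linear_cd L)"

definition Ob :: "real ^ 'n \<Rightarrow> (complex ^ 'n \<Rightarrow> complex) set" where
  "Ob b = {F. entire_cd F \<and>
     (\<exists>C>0. \<forall>z. norm (F z) \<le> C * (\<Prod>j\<in>UNIV. exp (b $ j * norm (z $ j) ^ 2)))}"

definition uniqueness_set :: "'a set \<Rightarrow> ('a \<Rightarrow> complex) set \<Rightarrow> bool" where
  "uniqueness_set \<Lambda> S \<longleftrightarrow>
     (\<forall>F\<in>S. (\<forall>z\<in>\<Lambda>. F z = 0) \<longrightarrow> (\<forall>z. F z = 0))"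

definition sym_seq_set :: "(nat \<Rightarrow> real) \<Rightarrow> real set" where
  "sym_seq_set l = {x. \<exists>k. x = l k \<or> x = - l k}"

definition product_lattice :: "('n \<Rightarrow> nat \<Rightarrow> real) \<Rightarrow> (complex ^ 'n) set" where
  "product_lattice lam = {z. \<forall>j. z $ j \<in> complex_of_real ` sym_seq_set (lam j)}"

end

theory Submission
  imports Defs "HOL-Complex_Analysis.Complex_Analysis"
begin

lemma div_zeros:
  fixes f :: "complex \<Rightarrow> complex"
  assumes holf: "f holomorphic_on UNIV" and fin: "finite A" and z: "\<And>a. a \<in> A \<Longrightarrow> f a = 0"
  shows "\<exists>q. q holomorphic_on UNIV \<and> (\<forall>z. f z = q z * (\<Prod>a\<in>A. z - a))"
  using fin z
proof (induction A rule: finite_induct)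
  case empty
  then show ?case using holf by auto
next
  case (insert a A)
  then obtain q where q: "q holomorphic_on UNIV" "\<And>z. f z = q z * (\<Prod>a\<in>A. z - a)" by auto
  have "(\<Prod>x\<in>A. a - x) \<noteq> 0" using insert.hyps by (simp add: prod_zero_iff)
  moreover have "f a = 0" using insert.prems by simp
  ultimately have qa: "q a = 0" using q(2)[of a] by simp
  define q2 where "q2 = (\<lambda>z. if z = a then deriv q a else (q z - q a) / (z - a))"
  have h2: "q2 holomorphic_on UNIV" unfolding q2_def by (rule pole_lemma_open[OF q(1)]) simp
  have "q z = q2 z * (z - a)" for z using qa by (simp add: q2_def)
  then have "f z = q2 z * (\<Prod>x\<in>insert a A. z - x)" for z
    using q(2)[of z] insert.hyps by (simp add: mult.assoc)
  then show ?case using h2 by blast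
qed
lemma factor_at_zero:
  fixes f :: "complex \<Rightarrow> complex"
  assumes holf: "f holomorphic_on UNIV" and nz: "f w \<noteq> 0"
  shows "\<exists>h m. h holomorphic_on UNIV \<and> h 0 \<noteq> 0 \<and> (\<forall>z. f z = z ^ m * h z)"
proof (cases "f 0 = 0")
  case False
  then show ?thesis using holf by (intro exI[of _ f] exI[of _ 0]) simp
next
  case True
  have nc: "\<not> f constant_on UNIV"
  proof
    assume "f constant_on UNIV"
    then obtain y where "\<And>x. f x = y" unfolding constant_on_def by blast
    then show False using True nz by simp
  qed
  have "\<exists>n r g. 0 < n \<and> 0 < r \<and> g holomorphic_on ball 0 r \<and>
     (\<forall>w\<in>ball 0 r. f w = w^n * g w \<and> g w \<noteq> 0)"
  proof (rule holomorphic_factor_zero_nonconstant[OF holf open_UNIV connected_UNIV UNIV_I True nc])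
    fix g :: "complex \<Rightarrow> complex" and r :: real and n :: nat
    assume "0 < n" "0 < r" "ball 0 r \<subseteq> UNIV" "g holomorphic_on ball 0 r"
      "\<And>w. w \<in> ball 0 r \<Longrightarrow> f w = (w - 0) ^ n * g w" "\<And>w. w \<in> ball 0 r \<Longrightarrow> g w \<noteq> 0"
    then show ?thesis by (intro exI[of _ n] exI[of _ r] exI[of _ g]) simp
  qed
  then obtain n r g where gr: "0 < n" "0 < r" "ball 0 r \<subseteq> UNIV" "g holomorphic_on ball 0 r"
     "\<And>w. w \<in> ball 0 r \<Longrightarrow> f w = (w - 0)^n * g w" "\<And>w. w \<in> ball 0 r \<Longrightarrow> g w \<noteq> 0"
    by auto
  define h where "h = (\<lambda>z. if z = 0 then g 0 else f z / z ^ n)"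
  have hol: "h holomorphic_on (ball 0 r \<union> (UNIV - {0}))"
  proof (rule holomorphic_on_Un)
    show "h holomorphic_on ball 0 r"
    proof (rule holomorphic_transform[OF gr(4)])
      fix x :: complex assume x: "x \<in> ball 0 r"
      show "g x = h x"
      proof (cases "x = 0")
        case False
        then show ?thesis using gr(5)[OF x] by (simp add: h_def)
      qed (simp add: h_def)
    qed
    have "(\<lambda>z. f z / z ^ n) holomorphic_on (UNIV - {0})"
      by (intro holomorphic_intros holomorphic_on_subset[OF holf]) auto
    then show "h holomorphic_on (UNIV - {0})"
      by (rule holomorphic_transform) (simp add: h_def)
  qed auto
  have eq: "ball 0 r \<union> (UNIV - {0}) = UNIV" using gr(2) by auto
  from hol have "h holomorphic_on UNIV" by (simp only: eq)
  moreover have "h 0 \<noteq> 0" using gr(2) gr(6)[of 0] by (simp add: h_def)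
  moreover have "f z = z ^ n * h z" for z
  proof (cases "z = 0")
    case True
    then show ?thesis using gr(1,2) gr(5)[of 0] by (simp add: h_def)
  qed (simp add: h_def)
  ultimately show ?thesis by (intro exI[of _ h] exI[of _ n]) simp
qed
lemma norm_circle_factor:
  fixes z :: complex and s R :: real
  assumes "norm z = R"
  shows "norm (complex_of_real (R^2) - of_real s * z) = R * norm (z - of_real s)"
proof -
  have "complex_of_real (R^2) = z * cnj z" using assms complex_norm_square[of z] by simp
  then have "complex_of_real (R^2) - of_real s * z = z * (cnj z - of_real s)" by (simp add: algebra_simps)
  moreover have "norm (cnj z - of_real s) = norm (z - of_real s)"
    by (metis complex_cnj_complex_of_real complex_cnj_diff complex_mod_cnj)
  ultimately show ?thesis using assms by (simp add: norm_mult)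
qed

lemma jensen_bound:
  fixes h :: "complex \<Rightarrow> complex" and S :: "real set"
  assumes holh: "h holomorphic_on UNIV" and fin: "finite S" and nz: "0 \<notin> S"
    and zer: "\<And>s. s \<in> S \<Longrightarrow> h (of_real s) = 0"
    and R: "R > 0" and bd: "\<And>z. norm z = R \<Longrightarrow> norm (h z) \<le> B"
  shows "norm (h 0) * (\<Prod>s\<in>S. R / \<bar>s\<bar>) \<le> B"
proof -
  have injr: "inj_on (complex_of_real) S" by (auto simp: inj_on_def)
  obtain q where q: "q holomorphic_on UNIV" "\<And>z. h z = q z * (\<Prod>a\<in>complex_of_real ` S. z - a)"
    using div_zeros[OF holh finite_imageI[OF fin], of complex_of_real] zer by auto
  have hq: "h z = q z * (\<Prod>s\<in>S. z - of_real s)" for z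
    using q(2)[of z] by (simp add: prod.reindex[OF injr])
  define Q where "Q = (\<lambda>z. q z * (\<Prod>s\<in>S. complex_of_real (R^2) - of_real s * z))"
  have holQ: "Q holomorphic_on UNIV" unfolding Q_def by (intro holomorphic_intros q(1))
  have "norm ((deriv ^^ 0) Q 0) \<le> (fact 0) * (R ^ card S * B) / R^0"
  proof (rule Cauchy_inequality)
    show "Q holomorphic_on ball 0 R" using holQ by (rule holomorphic_on_subset) auto
    show "continuous_on (cball 0 R) Q"
      using holQ holomorphic_on_imp_continuous_on holomorphic_on_subset by blast
    show "0 < R" by (rule R)
    fix x :: complex assume "norm (0 - x) = R"
    then have x: "norm x = R" by simp
    have "norm (Q x) = norm (q x) * (\<Prod>s\<in>S. R * norm (x - of_real s))"
      unfolding Q_def norm_mult prod_norm[symmetric] using norm_circle_factor[OF x] by (intro arg_cong2[where f="(*)"] refl prod.cong) auto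
    also have "\<dots> = R ^ card S * norm (h x)"
      by (simp add: hq norm_mult prod_norm[symmetric] prod.distrib)
    also have "\<dots> \<le> R ^ card S * B"
      using bd[OF x] R by (intro mult_left_mono) auto
    finally show "norm (Q x) \<le> R ^ card S * B" .
  qed
  then have Q0: "norm (q 0) * (R ^ 2) ^ card S \<le> R ^ card S * B"
    by (simp add: Q_def norm_mult prod_norm[symmetric] norm_power)
  have "(R ^ 2) ^ card S = R ^ card S * R ^ card S" by (simp add: power_mult_distrib power2_eq_square)
  then have "norm (q 0) * R ^ card S \<le> B"
  proof -
    have "R ^ card S * (norm (q 0) * R ^ card S) \<le> R ^ card S * B"
      using Q0 \<open>(R ^ 2) ^ card S = R ^ card S * R ^ card S\<close> by (simp add: algebra_simps)
    then show ?thesis using R by (simp add: mult_le_cancel_left_pos)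
  qed
  moreover have "norm (h 0) * (\<Prod>s\<in>S. R / \<bar>s\<bar>) = norm (q 0) * R ^ card S"
  proof -
    have "norm (h 0) = norm (q 0) * (\<Prod>s\<in>S. \<bar>s\<bar>)"
      by (simp add: hq norm_mult prod_norm[symmetric])
    moreover have "(\<Prod>s\<in>S. \<bar>s\<bar>) * (\<Prod>s\<in>S. R / \<bar>s\<bar>) = R ^ card S"
    proof -
      have "(\<Prod>s\<in>S. \<bar>s\<bar>) * (\<Prod>s\<in>S. R / \<bar>s\<bar>) = (\<Prod>s\<in>S. \<bar>s\<bar> * (R / \<bar>s\<bar>))"
        by (rule prod.distrib[symmetric])
      also have "\<dots> = (\<Prod>s\<in>S. R)"
        by (rule prod.cong) (use nz in auto)
      finally show ?thesis by simp
    qed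
    ultimately show ?thesis by (simp add: mult.assoc)
  qed
  ultimately show ?thesis by simp
qed
lemma uniq_1d:
  fixes g :: "complex \<Rightarrow> complex" and lam :: "nat \<Rightarrow> real" and b C :: real
  assumes holg: "g holomorphic_on UNIV" and b: "b > 0"
    and bd: "\<And>z. norm (g z) \<le> C * exp (b * norm z ^ 2)"
    and lpos: "\<And>k. lam k > 0" and mono: "strict_mono lam"
    and zer1: "\<And>k. g (of_real (lam k)) = 0" and zer2: "\<And>k. g (- of_real (lam k)) = 0"
    and lim: "liminf (\<lambda>k. ereal (lam k / sqrt (real k))) < ereal (1 / sqrt (b * exp 1))"
  shows "g z = 0"
proof (rule ccontr)
  assume gz: "g z \<noteq> 0"
  obtain h m where hm: "h holomorphic_on UNIV" "h 0 \<noteq> 0" "\<And>z. g z = z ^ m * h z"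
    using factor_at_zero[OF holg gz] by blast
  define u where "u = 1 / sqrt (b * exp 1)"
  have u: "u > 0" using b by (simp add: u_def)
  obtain r where r: "liminf (\<lambda>k. ereal (lam k / sqrt (real k))) < ereal r" "r < u"
    using ereal_dense2[OF lim] unfolding u_def by auto
  define c where "c = max r (u / 2)"
  have c: "c > 0" "c < u" "r \<le> c" using u r by (auto simp: c_def)
  have freq: "\<exists>\<^sub>F k in sequentially. lam k / sqrt (real k) < c"
  proof (rule ccontr)
    assume "\<not> ?thesis"
    then have "\<forall>\<^sub>F k in sequentially. ereal c \<le> ereal (lam k / sqrt (real k))"
      by (simp add: not_frequently not_less)
    then have "ereal c \<le> liminf (\<lambda>k. ereal (lam k / sqrt (real k)))"
      by (rule Liminf_bounded)
    moreover have "ereal r \<le> ereal c" using c by simp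
    ultimately show False using r(1) by (meson leD order_trans less_le_not_le)
  qed
  define \<alpha> where "\<alpha> = b * c^2 * exp 1"
  have "c * sqrt (b * exp 1) < 1"
    using c b by (simp add: u_def field_simps)
  then have "(c * sqrt (b * exp 1))^2 < 1^2"
    using c b by (intro power_strict_mono) auto
  then have \<alpha>1: "\<alpha> < 1" using b by (simp add: \<alpha>_def power_mult_distrib mult_ac)
  have \<alpha>0: "\<alpha> > 0" using b c by (simp add: \<alpha>_def)
  have "(\<lambda>k. C * exp (\<alpha> - 1) ^ k) \<longlonglongrightarrow> C * 0"
    by (intro tendsto_mult tendsto_const LIMSEQ_power_zero) (use \<alpha>1 in simp)
  then have "\<forall>\<^sub>F k in sequentially. C * exp (\<alpha> - 1) ^ k < norm (h 0) * exp 1"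
    using hm(2) by (intro order_tendstoD(2)) auto
  moreover have "\<forall>\<^sub>F k in sequentially. k \<ge> 1" by (rule eventually_ge_at_top)
  moreover have "\<forall>\<^sub>F k in sequentially. real k \<ge> 1 / (c^2 * exp 1)"
    by (rule eventually_ge_at_top[of "nat \<lceil>1 / (c^2 * exp 1)\<rceil>", THEN eventually_mono]) linarith
  ultimately have ev: "\<forall>\<^sub>F k in sequentially. C * exp (\<alpha> - 1) ^ k < norm (h 0) * exp 1 \<and> k \<ge> 1
      \<and> real k \<ge> 1 / (c^2 * exp 1)"
    by eventually_elim auto
  obtain n where n: "lam n / sqrt (real n) < c" "C * exp (\<alpha> - 1) ^ n < norm (h 0) * exp 1"
    "n \<ge> 1" "real n \<ge> 1 / (c^2 * exp 1)"
  proof -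
    have "\<exists>\<^sub>F k in sequentially. (C * exp (\<alpha> - 1) ^ k < norm (h 0) * exp 1 \<and> k \<ge> 1
      \<and> real k \<ge> 1 / (c^2 * exp 1)) \<and> lam k / sqrt (real k) < c"
      using frequently_eventually_conj[OF freq ev] .
    then show ?thesis using that by (auto dest: frequently_ex)
  qed
  define R where "R = c * sqrt (exp 1 * real n)"
  have Rpos: "R > 0" using c n(3) by (simp add: R_def)
  have R2: "R^2 = c^2 * exp 1 * real n" by (simp add: R_def power_mult_distrib)
  have R1: "R \<ge> 1"
  proof -
    have "1 \<le> c^2 * exp 1 * real n" using n(4) c by (simp add: field_simps)
    then have "1 \<le> R^2" using R2 by simp
    then show ?thesis using Rpos by (metis abs_of_pos one_le_power real_sqrt_abs real_sqrt_le_iff real_sqrt_one sqrt_le_D)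
  qed
  define S where "S = lam ` {..n} \<union> uminus ` lam ` {..n}"
  have finS: "finite S" by (simp add: S_def)
  have nzS: "0 \<notin> S" using lpos by (auto simp: S_def) (metis less_irrefl)+
  have zerS: "h (of_real s) = 0" if "s \<in> S" for s
  proof -
    have "g (of_real s) = 0" using that zer1 zer2 by (auto simp: S_def)
    moreover have "of_real s \<noteq> (0::complex)" using that nzS by auto
    ultimately show ?thesis using hm(3)[of "of_real s"] by simp
  qed
  have bdh: "norm (h w) \<le> C * exp (b * R^2)" if w: "norm w = R" for w
  proof -
    have "norm (h w) \<le> norm w ^ m * norm (h w)"
      using R1 w by (simp add: mult_le_cancel_right1 one_le_power)
    also have "\<dots> = norm (g w)" by (simp add: hm(3) norm_mult norm_power)
    also have "\<dots> \<le> C * exp (b * R^2)" using bd[of w] w by simp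
    finally show ?thesis .
  qed
  have J: "norm (h 0) * (\<Prod>s\<in>S. R / \<bar>s\<bar>) \<le> C * exp (b * R^2)"
    by (rule jensen_bound[OF hm(1) finS nzS zerS Rpos bdh])
  have injl: "inj_on lam {..n}" using strict_mono_imp_inj_on[OF mono] inj_on_subset by blast
  have cardS: "card S = 2 * (n + 1)"
  proof -
    have "card (lam ` {..n}) = n + 1" using card_image[OF injl] by simp
    moreover have "card (uminus ` lam ` {..n}) = card (lam ` {..n})"
      by (rule card_image) (auto simp: inj_on_def)
    moreover have "lam ` {..n} \<inter> uminus ` lam ` {..n} = {}"
      using lpos by auto (metis add.inverse_inverse less_asym neg_0_less_iff_less)
    ultimately show ?thesis unfolding S_def by (subst card_Un_disjoint) auto
  qed
  have lamn: "lam n < c * sqrt (real n)"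
    using n(1) n(3) by (simp add: field_simps)
  have fac: "sqrt (exp 1) \<le> R / \<bar>s\<bar>" if s: "s \<in> S" for s
  proof -
    have "\<bar>s\<bar> \<le> lam n"
    proof -
      obtain k where k: "k \<le> n" "\<bar>s\<bar> = lam k" using s lpos unfolding S_def
        by auto (metis abs_of_pos, metis abs_minus_cancel abs_of_pos)
      then show ?thesis using mono by (simp add: strict_mono_less_eq)
    qed
    have sp: "\<bar>s\<bar> > 0" using s nzS by auto
    have "sqrt (exp 1) * \<bar>s\<bar> \<le> sqrt (exp 1) * (c * sqrt (real n))"
      using \<open>\<bar>s\<bar> \<le> lam n\<close> lamn by (intro mult_left_mono) auto
    also have "\<dots> = R" by (simp add: R_def real_sqrt_mult)
    finally show ?thesis using sp by (simp add: field_simps)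
  qed
  have "sqrt (exp 1) ^ card S \<le> (\<Prod>s\<in>S. R / \<bar>s\<bar>)"
    using prod_mono[of S "\<lambda>_. sqrt (exp 1)" "\<lambda>s. R / \<bar>s\<bar>"] fac by simp
  moreover have "sqrt (exp 1) ^ card S = exp 1 * exp 1 ^ n"
    unfolding cardS power_mult by simp
  ultimately have "norm (h 0) * (exp 1 * exp 1 ^ n) \<le> norm (h 0) * (\<Prod>s\<in>S. R / \<bar>s\<bar>)"
    by (intro mult_left_mono) auto
  also note J
  also have "C * exp (b * R^2) = C * exp (\<alpha> - 1) ^ n * exp 1 ^ n"
  proof -
    have "b * R^2 = real n * \<alpha>" by (simp add: R2 \<alpha>_def)
    then have "exp (b * R^2) = exp \<alpha> ^ n" by (simp add: exp_of_nat_mult)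
    also have "\<dots> = (exp (\<alpha> - 1) * exp 1) ^ n" by (simp flip: exp_add)
    finally show ?thesis by (simp add: power_mult_distrib)
  qed
  finally have "norm (h 0) * exp 1 * exp 1 ^ n \<le> C * exp (\<alpha> - 1) ^ n * exp 1 ^ n"
    by (simp add: mult.assoc)
  then have "norm (h 0) * exp 1 \<le> C * exp (\<alpha> - 1) ^ n"
    by (simp add: mult_le_cancel_right_pos)
  then show False using n(2) by simp
qed
lemma slice_holo:
  fixes F :: "complex^'n \<Rightarrow> complex"
  assumes ent: "entire_cd F"
  shows "(\<lambda>t. F (\<chi> i. if i = j then t else w $ i)) holomorphic_on UNIV"
proof -
  define e :: "complex^'n" where "e = (\<chi> i. if i = j then 1 else 0)"
  define w' :: "complex^'n" where "w' = (\<chi> i. if i = j then 0 else w $ i)"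
  have seq: "(\<chi> i. if i = j then t else w $ i) = w' + t *s e" for t
    by (auto simp: vec_eq_iff e_def w'_def)
  have bl: "bounded_linear (\<lambda>h::complex. h *s e)"
  proof (rule bounded_linear_intro[of _ "norm e"])
    fix x y :: complex show "(x + y) *s e = x *s e + y *s e" by (simp add: vec_eq_iff algebra_simps)
  next
    fix r :: real and x :: complex show "(r *\<^sub>R x) *s e = r *\<^sub>R (x *s e)"
      by (simp add: vec_eq_iff mult_scaleR_left)
  next
    fix x :: complex
    have "norm (x *s e) = L2_set (\<lambda>i. norm x * norm (e $ i)) UNIV"
      unfolding norm_vec_def by (simp add: norm_mult)
    also have "\<dots> = norm x * norm e"
      unfolding norm_vec_def by (simp add: L2_set_right_distrib)
    finally show "norm (x *s e) \<le> norm x * norm e" by simp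
  qed
  show ?thesis
    unfolding holomorphic_on_def
  proof
    fix t :: complex assume "t \<in> UNIV"
    obtain L where L: "(F has_derivative L) (at (w' + t *s e))" "complex_linear_cd L"
      using ent unfolding entire_cd_def by blast
    have d1: "((\<lambda>t. w' + t *s e) has_derivative (\<lambda>h. h *s e)) (at t)"
      using has_derivative_add[OF has_derivative_const[of w'] bounded_linear_imp_has_derivative[OF bl]]
      by simp
    have "((F \<circ> (\<lambda>t. w' + t *s e)) has_derivative (L \<circ> (\<lambda>h. h *s e))) (at t)"
      by (rule diff_chain_at[OF d1 L(1)])
    moreover have "L \<circ> (\<lambda>h. h *s e) = (*) (L e)"
      using L(2) unfolding complex_linear_cd_def by (auto simp: fun_eq_iff mult.commute)
    ultimately have "((\<lambda>t. F (w' + t *s e)) has_field_derivative L e) (at t)"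
      unfolding has_field_derivative_def by (simp add: o_def)
    then show "(\<lambda>t. F (\<chi> i. if i = j then t else w $ i)) field_differentiable at t within UNIV"
      unfolding field_differentiable_def by (simp only: seq) (rule exI)
  qed
qed

lemma uniq_multi:
  fixes b :: "real ^ 'n" and lam :: "'n \<Rightarrow> nat \<Rightarrow> real"
  assumes b_pos: "\<And>j. b $ j > 0"
    and lam_pos: "\<And>j k. lam j k > 0"
    and lam_incr: "\<And>j. strict_mono (lam j)"
    and lim: "\<forall>j. liminf (\<lambda>k. ereal (lam j k / sqrt (real k)))
                < ereal (1 / sqrt (b $ j * exp 1))"
  shows "uniqueness_set (product_lattice lam) (Ob b)"
  unfolding uniqueness_set_def
proof (intro ballI impI)
  fix F assume F: "F \<in> Ob b" and van: "\<forall>z\<in>product_lattice lam. F z = 0"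
  from F have ent: "entire_cd F" unfolding Ob_def by blast
  from F obtain C where C: "C > 0"
    "\<And>z. norm (F z) \<le> C * (\<Prod>j\<in>UNIV. exp (b $ j * norm (z $ j) ^ 2))"
    unfolding Ob_def by blast
  define Ls where "Ls i = complex_of_real ` sym_seq_set (lam i)" for i
  have key: "\<forall>z. (\<forall>i. i \<notin> S \<longrightarrow> z $ i \<in> Ls i) \<longrightarrow> F z = 0" if "finite S" for S :: "'n set"
    using that
  proof (induction S rule: finite_induct)
    case empty
    then show ?case using van by (auto simp: product_lattice_def Ls_def)
  next
    case (insert j S)
    show ?case
    proof (intro allI impI)
      fix z :: "complex^'n" assume hz: "\<forall>i. i \<notin> insert j S \<longrightarrow> z $ i \<in> Ls i"
      define p where "p t = (\<chi> i. if i = j then t else z $ i)" for t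
      define g where "g t = F (p t)" for t
      have holg: "g holomorphic_on UNIV"
        unfolding g_def p_def by (rule slice_holo[OF ent])
      define K where "K = (\<Prod>i\<in>UNIV - {j}. exp (b $ i * norm (z $ i) ^ 2))"
      have bdg: "norm (g t) \<le> (C * K) * exp (b $ j * norm t ^ 2)" for t
      proof -
        have "(\<Prod>i\<in>UNIV. exp (b $ i * norm (p t $ i) ^ 2)) =
              exp (b $ j * norm (p t $ j) ^ 2) * (\<Prod>i\<in>UNIV - {j}. exp (b $ i * norm (p t $ i) ^ 2))"
          by (rule prod.remove) auto
        also have "(\<Prod>i\<in>UNIV - {j}. exp (b $ i * norm (p t $ i) ^ 2)) = K"
          unfolding K_def by (rule prod.cong) (auto simp: p_def)
        finally have "(\<Prod>i\<in>UNIV. exp (b $ i * norm (p t $ i) ^ 2)) = exp (b $ j * norm t ^ 2) * K"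
          by (simp add: p_def)
        then show ?thesis using C(2)[of "p t"] by (simp add: g_def mult_ac)
      qed
      have zer: "g x = 0" if "x \<in> Ls j" for x
      proof -
        have "\<forall>i. i \<notin> S \<longrightarrow> p x $ i \<in> Ls i"
          using hz that by (auto simp: p_def)
        then show ?thesis using insert.IH by (simp add: g_def)
      qed
      have z1: "g (of_real (lam j k)) = 0" for k
        by (rule zer) (auto simp: Ls_def sym_seq_set_def)
      have z2: "g (- of_real (lam j k)) = 0" for k
      proof (rule zer)
        have "- lam j k \<in> sym_seq_set (lam j)" by (auto simp: sym_seq_set_def)
        then show "- complex_of_real (lam j k) \<in> Ls j" unfolding Ls_def
          by (metis image_eqI of_real_minus)
      qed
      have "g (z $ j) = 0"
        using uniq_1d[where g=g and lam="lam j" and b="b $ j" and C="C * K", OF holg b_pos bdg lam_pos lam_incr z1 z2] lim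
        by blast
      moreover have "p (z $ j) = z" by (simp add: p_def vec_eq_iff)
      ultimately show "F z = 0" by (simp add: g_def)
    qed
  qed
  show "\<forall>z. F z = 0" using key[of UNIV] by simp
qed
lemma norm_sin_le_exp: "norm (sin (w::complex)) \<le> exp (norm w)"
proof -
  have "norm (sin w) = norm (exp (\<i> * w) - exp (-(\<i> * w))) / 2"
    by (simp add: sin_exp_eq norm_divide norm_mult)
  also have "\<dots> \<le> (norm (exp (\<i> * w)) + norm (exp (-(\<i> * w)))) / 2"
    by (intro divide_right_mono norm_triangle_ineq4) auto
  also have "\<dots> \<le> (exp (norm w) + exp (norm w)) / 2"
    using norm_exp[of "\<i> * w"] norm_exp[of "-(\<i> * w)"]
    by (intro divide_right_mono add_mono) (auto simp: norm_mult)
  finally show ?thesis by simp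
qed

lemma sinh_prod_bound:
  fixes x :: real
  assumes x: "x \<ge> 0"
  shows "(\<Prod>k=1..N. 1 + x^2 / real k ^ 2) \<le> exp (pi * x + 1)"
proof -
  define y where "y = max x (1 / pi)"
  have y1: "y \<ge> x" "y \<ge> 1 / pi" by (auto simp: y_def)
  have y2: "pi * y \<ge> 1"
    using mult_left_mono[OF y1(2), of pi] pi_gt_zero by simp
  have y3: "pi * y \<le> pi * x + 1"
  proof (cases "y = x")
    case True then show ?thesis by simp
  next
    case False then have "y = 1 / pi" unfolding y_def by (metis max_def)
    then show ?thesis using x pi_gt_zero by simp
  qed
  have y4: "y > 0" using y1(2) pi_gt_zero by (meson divide_pos_pos less_le_trans zero_less_one)
  note y = y1(1) y2 y3 y4
  define P where "P n = (\<Prod>k=1..n. 1 + y^2 / real k ^ 2)" for n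
  have "(\<Prod>k=1..N. 1 + x^2 / real k ^ 2) \<le> P N"
    unfolding P_def using x y
    by (intro prod_mono) (auto intro!: divide_right_mono power_mono)
  have lim: "(\<lambda>n. of_real pi * (\<i> * of_real y) * (\<Prod>k=1..n. 1 - (\<i> * of_real y)^2 / of_nat k^2))
      \<longlonglongrightarrow> sin (of_real pi * (\<i> * of_real y))"
    by (rule sin_product_formula_complex)
  have eqn: "norm (of_real pi * (\<i> * of_real y) * (\<Prod>k=1..n. 1 - (\<i> * of_real y)^2 / of_nat k^2))
      = pi * y * P n" for n
  proof -
    have "(\<Prod>k=1..n. 1 - (\<i> * complex_of_real y)^2 / of_nat k^2) = of_real (P n)"
      unfolding P_def of_real_prod by (intro prod.cong) (auto simp: power_mult_distrib)
    moreover have "P n \<ge> 0" unfolding P_def by (intro prod_nonneg) auto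
    ultimately show ?thesis using y pi_gt_zero by (simp add: norm_mult)
  qed
  have "(\<lambda>n. pi * y * P n) \<longlonglongrightarrow> norm (sin (of_real pi * (\<i> * of_real y)))"
    using tendsto_norm[OF lim] unfolding eqn .
  moreover have "\<exists>M. \<forall>n\<ge>M. pi * y * P N \<le> pi * y * P n"
  proof (intro exI[of _ N] allI impI)
    fix n assume "N \<le> n"
    then have "P N \<le> P n" unfolding P_def
      by (intro prod_mono2) auto
    then show "pi * y * P N \<le> pi * y * P n" using y by (intro mult_left_mono) auto
  qed
  ultimately have "pi * y * P N \<le> norm (sin (of_real pi * (\<i> * of_real y)))"
    by (rule LIMSEQ_le_const)
  also have "\<dots> \<le> exp (pi * y)"
    using norm_sin_le_exp[of "of_real pi * (\<i> * of_real y)"] y pi_gt_zero by (simp add: norm_mult)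
  finally have "pi * y * P N \<le> exp (pi * y)" .
  moreover have "P N \<ge> 0" unfolding P_def by (intro prod_nonneg) auto
  ultimately have "P N \<le> exp (pi * y)"
    using y by (smt (verit) mult_le_cancel_right1 mult.commute)
  also have "\<dots> \<le> exp (pi * x + 1)" using y by simp
  finally show ?thesis using \<open>(\<Prod>k=1..N. 1 + x^2 / real k ^ 2) \<le> P N\<close> by simp
qed

lemma poly_factor_bound:
  fixes t \<mu> \<epsilon> :: real
  assumes "\<mu> > 0" "\<epsilon> > 0" "t \<ge> 0"
  shows "1 + t^2 / \<mu> \<le> (1 + 4 / (\<epsilon>^2 * \<mu>)) * exp (\<epsilon> * t)"
proof -
  have "1 + \<epsilon> * t / 2 \<le> exp (\<epsilon> * t / 2)" by (rule exp_ge_add_one_self)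
  then have "\<epsilon> * t / 2 \<le> exp (\<epsilon> * t / 2)" by linarith
  then have "(\<epsilon> * t / 2)^2 \<le> (exp (\<epsilon> * t / 2))^2"
    using assms by (intro power_mono) auto
  also have "\<dots> = exp (\<epsilon> * t)" by (simp flip: exp_of_nat_mult)
  finally have "(\<epsilon> * t)^2 \<le> 4 * exp (\<epsilon> * t)" by (simp add: power_divide)
  then have t2: "t^2 \<le> 4 * exp (\<epsilon> * t) / \<epsilon>^2"
    using assms by (simp add: field_simps power_mult_distrib)
  have "t^2 / \<mu> \<le> (4 * exp (\<epsilon> * t) / \<epsilon>^2) / \<mu>"
    using t2 assms by (intro divide_right_mono) auto
  moreover have "1 \<le> exp (\<epsilon> * t)" using assms by simp
  ultimately have "1 + t^2 / \<mu> \<le> exp (\<epsilon> * t) + (4 * exp (\<epsilon> * t) / \<epsilon>^2) / \<mu>" by linarith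
  also have "\<dots> = (1 + 4 / (\<epsilon>^2 * \<mu>)) * exp (\<epsilon> * t)" by (simp add: field_simps)
  finally show ?thesis .
qed
lemma exists_G:
  fixes lam :: "nat \<Rightarrow> real" and b c :: real
  assumes b: "b > 0" and lpos: "\<And>k. lam k > 0" and c: "c > 0" and cb: "pi / c^2 < b"
    and ev: "\<forall>\<^sub>F k in sequentially. c * sqrt (real k) < lam k"
  shows "\<exists>G. G holomorphic_on UNIV \<and> G 0 \<noteq> 0 \<and>
     (\<forall>k. G (of_real (lam k)) = 0 \<and> G (- of_real (lam k)) = 0) \<and>
     (\<exists>C. \<forall>z. norm (G z) \<le> C * exp (b * norm z ^ 2))"
proof -
  obtain K0 where K0: "\<And>k. k \<ge> K0 \<Longrightarrow> c * sqrt (real k) < lam k"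
    using ev unfolding eventually_sequentially by auto
  define K where "K = max K0 1"
  have K1: "K \<ge> 1" by (simp add: K_def)
  have K2: "c * sqrt (real k) < lam k" if "k \<ge> K" for k using K0 that by (simp add: K_def)
  have lam4: "c^4 * real k ^ 2 \<le> lam k ^ 4" if "k \<ge> K" for k
  proof -
    have "(c * sqrt (real k)) ^ 4 \<le> lam k ^ 4"
      using K2[OF that] c by (intro power_mono) auto
    moreover have "(c * sqrt (real k)) ^ 4 = c^4 * real k ^ 2"
    proof -
      have "(sqrt (real k) ^ 2) ^ 2 = sqrt (real k) ^ 4" by (subst power_mult[symmetric]) simp
      moreover have "(sqrt (real k) ^ 2) ^ 2 = real k ^ 2" by simp
      ultimately show ?thesis by (simp add: power_mult_distrib)
    qed
    ultimately show ?thesis by simp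
  qed
  have lnz: "lam k \<noteq> 0" for k using lpos[of k] by simp
  define \<mu> where "\<mu> n = complex_of_real (lam n ^ 4)" for n
  have norm\<mu>: "norm (\<mu> n) = lam n ^ 4" for n
    using lpos[of n] by (simp add: \<mu>_def norm_power)
  interpret W: weierstrass_product \<mu> "\<lambda>_. 0"
  proof
    show "\<mu> n \<noteq> 0" for n using lpos[of n] by (simp add: \<mu>_def)
    show "filterlim \<mu> at_infinity at_top"
      unfolding filterlim_at_infinity_conv_norm_at_top
    proof (rule filterlim_at_top_mono[where f="\<lambda>n. c^4 * real n"])
      show "filterlim (\<lambda>n. c^4 * real n) at_top sequentially"
        using c by (intro filterlim_tendsto_pos_mult_at_top[OF tendsto_const] filterlim_real_sequentially) auto
      show "\<forall>\<^sub>F n in sequentially. c^4 * real n \<le> norm (\<mu> n)"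
        using eventually_ge_at_top[of K]
      proof eventually_elim
        case (elim n)
        have "real n \<le> real n ^ 2" using elim K1 by (simp add: power2_eq_square)
        then have "c^4 * real n \<le> c^4 * real n ^ 2" using c by (intro mult_left_mono) auto
        also have "\<dots> \<le> lam n ^ 4" by (rule lam4[OF elim])
        finally show ?case by (simp add: norm\<mu>)
      qed
    qed
    show "summable (\<lambda>n. (r / norm (\<mu> n)) ^ Suc 0)" if r: "r > 0" for r
    proof (rule summable_comparison_test_ev)
      show "summable (\<lambda>n. r / c^4 * inverse (real n ^ 2))"
        by (intro summable_mult inverse_power_summable) auto
      show "\<forall>\<^sub>F n in sequentially. norm ((r / norm (\<mu> n)) ^ Suc 0) \<le> r / c^4 * inverse (real n ^ 2)"
        using eventually_ge_at_top[of K]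
      proof eventually_elim
        case (elim n)
        have pos: "0 < c^4 * real n ^ 2" using c elim K1 by simp
        have "r / lam n ^ 4 \<le> r / (c^4 * real n ^ 2)"
          using lam4[OF elim] pos r by (intro divide_left_mono) (auto intro!: mult_pos_pos)
        then show ?case using r lpos[of n] by (simp add: norm\<mu> field_simps)
      qed
    qed
  qed
  define G where "G z = W.f (z ^ 4)" for z
  have holG: "G holomorphic_on UNIV"
  proof -
    have "(W.f \<circ> (\<lambda>z. z ^ 4)) holomorphic_on UNIV"
      by (rule holomorphic_on_compose) (auto intro!: holomorphic_intros W.holomorphic)
    then show ?thesis by (rule holomorphic_transform) (simp add: G_def)
  qed
  have G0: "G 0 \<noteq> 0"
  proof -
    have "0 \<notin> range \<mu>" using lpos by (auto simp: \<mu>_def) (metis less_irrefl)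
    then show ?thesis using W.zero[of 0] by (simp add: G_def)
  qed
  have Gz: "G (of_real (lam k)) = 0 \<and> G (- of_real (lam k)) = 0" for k
  proof -
    have "(complex_of_real (lam k))^4 = \<mu> k" by (simp add: \<mu>_def)
    moreover have "(- complex_of_real (lam k))^4 = \<mu> k" by (simp add: \<mu>_def)
    ultimately show ?thesis using W.zero by (simp add: G_def)
  qed
  define \<epsilon> where "\<epsilon> = (b - pi / c^2) / real K"
  have \<epsilon>: "\<epsilon> > 0" using cb K1 by (simp add: \<epsilon>_def)
  define D where "D = (\<Prod>n<K. 1 + 4 / (\<epsilon>^2 * lam n ^ 4))"
  have bound: "norm (G z) \<le> (D * exp 1) * exp (b * norm z ^ 2)" for z
  proof -
    define t where "t = norm z ^ 2"
    have t: "t \<ge> 0" by (simp add: t_def)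
    define w where "w = z ^ 4"
    have normw: "norm w = t ^ 2" by (simp add: w_def t_def norm_power flip: power_mult)
    have wf: "weierstrass_factor 0 u = 1 - u" for u by (simp add: weierstrass_factor_def)
    have tend: "(\<lambda>N. norm (\<Prod>n<N. weierstrass_factor 0 (w / \<mu> n))) \<longlonglongrightarrow> norm (W.f w)"
      by (intro tendsto_norm has_prod_imp_tendsto' W.has_prod)
    have "norm (W.f w) \<le> (D * exp 1) * exp (b * t)"
    proof (rule LIMSEQ_le_const2[OF tend], intro exI[of _ K] allI impI)
      fix N assume N: "K \<le> N"
      define g where "g n = 1 + t^2 / lam n ^ 4" for n
      have g1: "g n \<ge> 1" for n using t by (simp add: g_def)
      have "norm (\<Prod>n<N. weierstrass_factor 0 (w / \<mu> n)) = (\<Prod>n<N. norm (1 - w / \<mu> n))"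
        by (simp add: wf prod_norm)
      also have "\<dots> \<le> (\<Prod>n<N. g n)"
      proof (rule prod_mono)
        fix n assume "n \<in> {..<N}"
        have "norm (1 - w / \<mu> n) \<le> norm (1::complex) + norm (w / \<mu> n)" by (rule norm_triangle_ineq4)
        also have "\<dots> = g n" by (simp add: g_def norm_divide normw norm\<mu>)
        finally show "0 \<le> norm (1 - w / \<mu> n) \<and> norm (1 - w / \<mu> n) \<le> g n" by simp
      qed
      also have "(\<Prod>n<N. g n) = (\<Prod>n<K. g n) * (\<Prod>n\<in>{K..<N}. g n)"
      proof -
        have "{..<N} = {..<K} \<union> {K..<N}" using N by auto
        moreover have "prod g ({..<K} \<union> {K..<N}) = prod g {..<K} * prod g {K..<N}"
          by (rule prod.union_disjoint) auto
        ultimately show ?thesis by simp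
      qed
      also have "\<dots> \<le> (D * exp (b * t - pi * (t / c^2))) * exp (pi * (t / c^2) + 1)"
      proof (rule mult_mono)
        have "(\<Prod>n<K. g n) \<le> (\<Prod>n<K. (1 + 4 / (\<epsilon>^2 * lam n ^ 4)) * exp (\<epsilon> * t))"
          unfolding g_def using lpos lnz \<epsilon> t
          by (intro prod_mono conjI poly_factor_bound) (auto intro: add_nonneg_nonneg)
        also have "\<dots> = D * exp (\<epsilon> * t) ^ K" by (simp add: D_def prod.distrib)
        also have "exp (\<epsilon> * t) ^ K = exp (b * t - pi * (t / c^2))"
          using K1 by (simp add: \<epsilon>_def flip: exp_of_nat_mult) (simp add: field_simps)
        finally show "(\<Prod>n<K. g n) \<le> D * exp (b * t - pi * (t / c^2))" .
        have "(\<Prod>n\<in>{K..<N}. g n) \<le> (\<Prod>n\<in>{K..<N}. 1 + (t / c^2)^2 / real n ^ 2)"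
        proof (rule prod_mono)
          fix n assume n: "n \<in> {K..<N}"
          have pos: "0 < c^4 * real n ^ 2" using c n K1 by simp
          have "t^2 / lam n ^ 4 \<le> t^2 / (c^4 * real n ^ 2)"
            using lam4[of n] n pos by (intro divide_left_mono) (auto intro!: mult_pos_pos)
          also have "\<dots> = (t / c^2)^2 / real n ^ 2" by (simp add: power_divide field_simps)
          finally show "0 \<le> g n \<and> g n \<le> 1 + (t / c^2)^2 / real n ^ 2"
            using g1[of n] by (simp add: g_def)
        qed
        also have "\<dots> \<le> (\<Prod>n=1..N. 1 + (t / c^2)^2 / real n ^ 2)"
          using K1 by (intro prod_mono2) auto
        also have "\<dots> \<le> exp (pi * (t / c^2) + 1)"
          using t c by (intro sinh_prod_bound) auto
        finally show "(\<Prod>n\<in>{K..<N}. g n) \<le> exp (pi * (t / c^2) + 1)" .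
        show "0 \<le> (\<Prod>n\<in>{K..<N}. g n)" using g1 by (intro prod_nonneg) (auto intro: order_trans[OF zero_le_one])
        show "0 \<le> D * exp (b * t - pi * (t / c^2))"
          unfolding D_def using lpos lnz \<epsilon> by (intro mult_nonneg_nonneg prod_nonneg) (auto intro: add_nonneg_nonneg)
      qed
      also have "\<dots> = (D * exp 1) * exp (b * t)"
        by (simp add: mult_ac flip: exp_add)
      finally show "norm (\<Prod>n<N. weierstrass_factor 0 (w / \<mu> n)) \<le> (D * exp 1) * exp (b * t)" .
    qed
    then show ?thesis by (simp add: G_def w_def t_def)
  qed
  show ?thesis using holG G0 Gz bound by blast
qed


lemma nonuniq_multi:
  fixes b :: "real ^ 'n" and lam :: "'n \<Rightarrow> nat \<Rightarrow> real"
  assumes b_pos: "\<And>j. b $ j > 0"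
    and lam_pos: "\<And>j k. lam j k > 0"
    and hj: "liminf (\<lambda>k. ereal (lam j k / sqrt (real k))) > ereal (sqrt (pi / b $ j))"
  shows "\<not> uniqueness_set (product_lattice lam) (Ob b)"
proof -
  obtain c where c1: "sqrt (pi / b $ j) < c" and c2: "ereal c < liminf (\<lambda>k. ereal (lam j k / sqrt (real k)))"
    using ereal_dense2[OF hj] by auto
  have sq0: "sqrt (pi / b $ j) \<ge> 0" using b_pos[of j] by simp
  then have c: "c > 0" using c1 by linarith
  have "(sqrt (pi / b $ j))^2 < c^2" using c1 sq0 by (intro power_strict_mono) auto
  then have "pi / b $ j < c^2" using b_pos[of j] by simp
  then have cb: "pi / c^2 < b $ j" using c b_pos[of j] by (simp add: field_simps)
  have ev: "\<forall>\<^sub>F k in sequentially. c * sqrt (real k) < lam j k"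
    using less_LiminfD[OF c2] eventually_ge_at_top[of 1]
  proof eventually_elim
    case (elim k)
    then have "c < lam j k / sqrt (real k)" by simp
    moreover have "sqrt (real k) > 0" using elim by simp
    ultimately show ?case by (simp add: field_simps)
  qed
  obtain G C0 where G: "G holomorphic_on UNIV" "G 0 \<noteq> 0"
     "\<And>k. G (of_real (lam j k)) = 0" "\<And>k. G (- of_real (lam j k)) = 0"
     "\<And>z. norm (G z) \<le> C0 * exp (b $ j * norm z ^ 2)"
    using exists_G[OF b_pos lam_pos c cb ev] by blast
  define F where "F z = G (z $ j)" for z :: "complex^'n"
  define C where "C = max C0 1"
  have ent: "entire_cd F"
    unfolding entire_cd_def
  proof
    fix z :: "complex^'n"
    have "G field_differentiable at (z $ j)"
      using G(1) holomorphic_on_imp_differentiable_at by blast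
    then have "(G has_field_derivative deriv G (z $ j)) (at (z $ j))"
      by (rule field_differentiable_derivI)
    then have dG: "(G has_derivative (*) (deriv G (z $ j))) (at (z $ j))"
      by (simp add: has_field_derivative_def)
    have "((G \<circ> (\<lambda>z. z $ j)) has_derivative ((*) (deriv G (z $ j)) \<circ> (\<lambda>h. h $ j))) (at z)"
      by (rule diff_chain_at[OF bounded_linear_imp_has_derivative[OF bounded_linear_vec_nth] dG])
    moreover have Feq: "F = (\<lambda>x. G (x $ j))" by (simp add: fun_eq_iff F_def)
    ultimately have "(F has_derivative (\<lambda>h. deriv G (z $ j) * h $ j)) (at z)"
      by (simp add: o_def)
    moreover have "complex_linear_cd (\<lambda>h. deriv G (z $ j) * h $ j)"
      unfolding complex_linear_cd_def by (simp add: algebra_simps)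
    ultimately show "\<exists>L. (F has_derivative L) (at z) \<and> complex_linear_cd L" by blast
  qed
  have bd: "norm (F z) \<le> C * (\<Prod>i\<in>UNIV. exp (b $ i * norm (z $ i) ^ 2))" for z
  proof -
    have eq1: "(\<Prod>i\<in>UNIV. exp (b $ i * norm (z $ i) ^ 2)) =
          exp (b $ j * norm (z $ j) ^ 2) * (\<Prod>i\<in>UNIV - {j}. exp (b $ i * norm (z $ i) ^ 2))"
      by (rule prod.remove) auto
    have ge1: "(\<Prod>i\<in>UNIV - {j}. exp (b $ i * norm (z $ i) ^ 2)) \<ge> 1"
    proof (intro prod_ge_1)
      fix i have "0 \<le> b $ i * norm (z $ i) ^ 2" using b_pos[of i] by simp
      then show "1 \<le> exp (b $ i * norm (z $ i) ^ 2)" by simp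
    qed
    have "exp (b $ j * norm (z $ j) ^ 2) * 1 \<le>
        exp (b $ j * norm (z $ j) ^ 2) * (\<Prod>i\<in>UNIV - {j}. exp (b $ i * norm (z $ i) ^ 2))"
      by (rule mult_left_mono[OF ge1]) simp
    then have P: "exp (b $ j * norm (z $ j) ^ 2) \<le> (\<Prod>i\<in>UNIV. exp (b $ i * norm (z $ i) ^ 2))"
      unfolding eq1 by simp
    have "norm (F z) \<le> C0 * exp (b $ j * norm (z $ j) ^ 2)" using G(5) by (simp add: F_def)
    also have "\<dots> \<le> C * exp (b $ j * norm (z $ j) ^ 2)"
      by (intro mult_right_mono) (auto simp: C_def)
    also have "\<dots> \<le> C * (\<Prod>i\<in>UNIV. exp (b $ i * norm (z $ i) ^ 2))"
      using P by (intro mult_left_mono) (auto simp: C_def)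
    finally show ?thesis .
  qed
  have FOb: "F \<in> Ob b"
    unfolding Ob_def using ent bd by (auto intro!: exI[of _ C] simp: C_def)
  have van: "\<forall>z\<in>product_lattice lam. F z = 0"
  proof
    fix z assume "z \<in> product_lattice lam"
    then obtain x where x: "x \<in> sym_seq_set (lam j)" "z $ j = complex_of_real x"
      unfolding product_lattice_def by blast
    then obtain k where "x = lam j k \<or> x = - lam j k" unfolding sym_seq_set_def by blast
    then show "F z = 0" using G(3,4) x(2) by (auto simp: F_def)
  qed
  have "F 0 \<noteq> 0" using G(2) by (simp add: F_def)
  then show ?thesis
    unfolding uniqueness_set_def using FOb van by blast
qed

theorem proposition2p5:
  fixes b :: "real ^ 'n" and lam :: "'n \<Rightarrow> nat \<Rightarrow> real"
  assumes b_pos: "\<And>j. b $ j > 0"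
    and lam_pos: "\<And>j k. lam j k > 0"
    and lam_incr: "\<And>j. strict_mono (lam j)"
  shows "((\<forall>j. liminf (\<lambda>k. ereal (lam j k / sqrt (real k)))
                < ereal (1 / sqrt (b $ j * exp 1)))
           \<longrightarrow> uniqueness_set (product_lattice lam) (Ob b)) \<and>
         ((\<exists>j. liminf (\<lambda>k. ereal (lam j k / sqrt (real k)))
                > ereal (sqrt (pi / b $ j)))
           \<longrightarrow> \<not> uniqueness_set (product_lattice lam) (Ob b))"
proof (intro conjI impI)
  assume "\<forall>j. liminf (\<lambda>k. ereal (lam j k / sqrt (real k))) < ereal (1 / sqrt (b $ j * exp 1))"
  then show "uniqueness_set (product_lattice lam) (Ob b)"
    by (rule uniq_multi[where b=b and lam=lam, OF b_pos lam_pos lam_incr])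
next
  assume "\<exists>j. liminf (\<lambda>k. ereal (lam j k / sqrt (real k))) > ereal (sqrt (pi / b $ j))"
  then obtain j where "liminf (\<lambda>k. ereal (lam j k / sqrt (real k))) > ereal (sqrt (pi / b $ j))" by blast
  then show "\<not> uniqueness_set (product_lattice lam) (Ob b)"
    by (rule nonuniq_multi[where b=b and lam=lam, OF b_pos lam_pos])
qed

end
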